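(* Let $A$ be a general metric space, $M$ a left module on $A$ and $\mathcal F$ a filter on $A$. Then $\sup_{x\in A}[M^-(\mathcal F)(x),M(x)]\ \le\ \lim^+_{\mathcal F}M$, with equality if $\mathcal F$ is weakly flat. In particular, for weakly flat filters $\mathcal F_1,\mathcal F_2$, $$\sup_{x\in A}[M^-(\mathcal F_1)(x),M^-(\mathcal F_2)(x)]=\lim^+_{x\in\mathcal F_1}\lim^-_{y\in\mathcal F_2}A(x,y).$$
   Context: $[0,\infty]$ with $+$ ($x+\infty=\infty$), $[x,y]=\max(y-x,0)$ for finite $x,y$, $[x,\infty]=\infty$ for $x<\infty$, $[\infty,y]=0$; $\inf\emptyset=\infty$, $\sup\emptyset=0$. A general metric space $A$ is a set with $A(-,-):A\times A\to[0,\infty]$, $A(x,x)=0$, $A(x,z)\le A(x,y)+A(y,z)$. A left module is $M:A\to[0,\infty]$ with $M(x)\le M(y)+A(x,y)$. A filter on $A$ is a nonempty set of nonempty subsets closed under finite intersections and supersets; $\lim^+_{\mathcal F}t=\inf_{f\in\mathcal F}\sup_{x\in f}t(x)$, $\lim^-_{\mathcal F}t=\sup_{f\in\mathcal F}\inf_{x\in f}t(x)$; $M^-(\mathcal F)(x)=\lim^-_{y\in\mathcal F}A(x,y)$; $\mathcal F$ is weakly flat iff $\lim^+_{\mathcal F}M^-(\mathcal F)=0$. *)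

theory Defs
  imports "HOL-Library.Extended_Nonnegative_Real" "HOL-Library.Liminf_Limsup"
begin

text \<open>Values in [0,\<infinity>] are modelled by ennreal; the carrier of the metric space is the type 'a.
  Filters are Isabelle filters different from bot (proper filters).\<close>

definition ihom :: "ennreal \<Rightarrow> ennreal \<Rightarrow> ennreal" where
  "ihom x y = (if x = \<infinity> then 0 else if y = \<infinity> then \<infinity> else y - x)"

definition gen_metric :: "('a \<Rightarrow> 'a \<Rightarrow> ennreal) \<Rightarrow> bool" where
  "gen_metric d \<longleftrightarrow> (\<forall>x. d x x = 0) \<and> (\<forall>x y z. d x z \<le> d x y + d y z)"

definition left_module :: "('a \<Rightarrow> 'a \<Rightarrow> ennreal) \<Rightarrow> ('a \<Rightarrow> ennreal) \<Rightarrow> bool" where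
  "left_module d M \<longleftrightarrow> (\<forall>x y. M x \<le> M y + d x y)"

definition Mminus :: "('a \<Rightarrow> 'a \<Rightarrow> ennreal) \<Rightarrow> 'a filter \<Rightarrow> 'a \<Rightarrow> ennreal" where
  "Mminus d F x = Liminf F (\<lambda>y. d x y)"

definition weakly_flat :: "('a \<Rightarrow> 'a \<Rightarrow> ennreal) \<Rightarrow> 'a filter \<Rightarrow> bool" where
  "weakly_flat d F \<longleftrightarrow> Limsup F (Mminus d F) = 0"

end

theory Submission
  imports Defs
begin

lemma liminf_add_le_limsup:
  fixes f g :: "'a \<Rightarrow> ennreal"
  assumes F: "F \<noteq> bot"
  shows "Liminf F (\<lambda>y. f y + g y) \<le> Limsup F f + Liminf F g"
proof (cases "Liminf F g = top")
  case True then show ?thesis by simp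
next
  case False
  let ?L = "Liminf F g"
  have "Liminf F (\<lambda>y. f y + g y) - ?L \<le> Limsup F f"
    unfolding Limsup_def
  proof (rule INF_greatest)
    fix Q assume "Q \<in> {P. eventually P F}"
    then have Q: "eventually Q F" by simp
    let ?c = "SUP x\<in>{x. Q x}. f x"
    have "eventually (\<lambda>y. f y + g y \<le> ?c + g y) F"
      using Q by (rule eventually_mono) (auto intro!: add_mono SUP_upper)
    then have "Liminf F (\<lambda>y. f y + g y) \<le> Liminf F (\<lambda>y. ?c + g y)" by (rule Liminf_mono)
    also have "\<dots> = ?c + ?L" using Liminf_const_add[OF F] by blast
    finally show "Liminf F (\<lambda>y. f y + g y) - ?L \<le> ?c"
      using False by (simp add: ennreal_minus_le_iff add.commute)
  qed
  then show ?thesis using False by (simp add: ennreal_minus_le_iff add.commute)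
qed

lemma part1:
  fixes d :: "'a \<Rightarrow> 'a \<Rightarrow> ennreal"
  assumes "left_module d M" and F: "F \<noteq> bot"
  shows "ihom (Mminus d F x) (M x) \<le> Limsup F M"
proof -
  have "M x = Liminf F (\<lambda>y. M x)" using Liminf_const[of F "M x"] F by simp
  also have "\<dots> \<le> Liminf F (\<lambda>y. M y + d x y)"
    using assms(1) unfolding left_module_def by (intro Liminf_mono) auto
  also have "\<dots> \<le> Limsup F M + Mminus d F x"
    unfolding Mminus_def by (rule liminf_add_le_limsup[OF F])
  finally have *: "M x \<le> Limsup F M + Mminus d F x" .
  show ?thesis unfolding ihom_def
    using * by (auto simp: ennreal_minus_le_iff add.commute top_unique)
qed

lemma part2:
  fixes d :: "'a \<Rightarrow> 'a \<Rightarrow> ennreal"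
  assumes "left_module d M" and F: "F \<noteq> bot" and wf: "weakly_flat d F"
  shows "(SUP x. ihom (Mminus d F x) (M x)) = Limsup F M"
proof (rule antisym)
  show "(SUP x. ihom (Mminus d F x) (M x)) \<le> Limsup F M"
    using part1[OF assms(1,2)] by (rule SUP_least)
next
  let ?S = "SUP x. ihom (Mminus d F x) (M x)"
  have pt: "M x \<le> ?S + Mminus d F x" for x
  proof (cases "Mminus d F x = top")
    case True then show ?thesis by simp
  next
    case False
    have "ihom (Mminus d F x) (M x) \<le> ?S" by (rule SUP_upper) simp
    then have "M x - Mminus d F x \<le> ?S" using False by (simp add: ihom_def split: if_splits)
    then show ?thesis using False by (simp add: ennreal_minus_le_iff add.commute)
  qed
  have "Limsup F M \<le> Limsup F (\<lambda>x. ?S + Mminus d F x)"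
    using pt by (intro Limsup_mono) auto
  also have "\<dots> = ?S + Limsup F (Mminus d F)" using Limsup_const_add[OF F] by blast
  also have "\<dots> = ?S" using wf unfolding weakly_flat_def by simp
  finally show "Limsup F M \<le> ?S" .
qed

lemma mminus_module:
  fixes d :: "'a \<Rightarrow> 'a \<Rightarrow> ennreal"
  assumes "gen_metric d" and F: "F \<noteq> bot"
  shows "left_module d (Mminus d F)"
  unfolding left_module_def
proof (intro allI)
  fix x x'
  have "Mminus d F x \<le> Liminf F (\<lambda>y. d x x' + d x' y)"
    unfolding Mminus_def using assms(1) unfolding gen_metric_def
    by (intro Liminf_mono) auto
  also have "\<dots> = d x x' + Mminus d F x'" unfolding Mminus_def using Liminf_const_add[OF F] by blast
  finally show "Mminus d F x \<le> Mminus d F x' + d x x'" by (simp add: add.commute)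
qed

theorem mainTheorem15:
  fixes d :: "'a \<Rightarrow> 'a \<Rightarrow> ennreal" and M :: "'a \<Rightarrow> ennreal" and F :: "'a filter"
  assumes "gen_metric d" and "left_module d M" and "F \<noteq> bot"
  shows "(SUP x. ihom (Mminus d F x) (M x)) \<le> Limsup F M
    \<and> (weakly_flat d F \<longrightarrow> (SUP x. ihom (Mminus d F x) (M x)) = Limsup F M)
    \<and> (\<forall>F1 F2. F1 \<noteq> bot \<longrightarrow> F2 \<noteq> bot \<longrightarrow> weakly_flat d F1 \<longrightarrow> weakly_flat d F2 \<longrightarrow>
          (SUP x. ihom (Mminus d F1 x) (Mminus d F2 x)) = Limsup F1 (\<lambda>x. Liminf F2 (\<lambda>y. d x y)))"
proof (intro conjI impI allI)
  show "(SUP x. ihom (Mminus d F x) (M x)) \<le> Limsup F M"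
    using part1[OF assms(2,3)] by (rule SUP_least)
next
  assume "weakly_flat d F"
  then show "(SUP x. ihom (Mminus d F x) (M x)) = Limsup F M"
    using part2[OF assms(2,3)] by blast
next
  fix F1 F2 :: "'a filter"
  assume h: "F1 \<noteq> bot" "F2 \<noteq> bot" "weakly_flat d F1" "weakly_flat d F2"
  have eqM: "Mminus d F2 = (\<lambda>x. Liminf F2 (\<lambda>y. d x y))" by (rule ext) (simp add: Mminus_def)
  have "(SUP x. ihom (Mminus d F1 x) (Mminus d F2 x)) = Limsup F1 (Mminus d F2)"
    using part2[OF mminus_module[OF assms(1) h(2)] h(1) h(3)] .
  then show "(SUP x. ihom (Mminus d F1 x) (Mminus d F2 x)) = Limsup F1 (\<lambda>x. Liminf F2 (\<lambda>y. d x y))"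
    using eqM by simp
qed

end
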